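(* Every centrality has ties on every graph that is not rigid. Moreover, there exists a centrality $f$ such that for every rigid graph $G$, $f$ has no ties on $G$.
   Context: A graph $G=(V_G,E_G)$ is a finite directed graph with node set $V_G=\{0,1,\dots,n-1\}$ and arc set $E_G\subseteq V_G\times V_G$; write $x\to y$ for $(x,y)\in E_G$. An isomorphism $\varphi:G\to H$ is a bijection $V_G\to V_H$ such that $x\to_G y$ iff $\varphi(x)\to_H\varphi(y)$; an automorphism is an isomorphism $G\to G$. A graph is rigid if its only automorphism is the identity. A centrality $f$ is a function associating with each graph $G$ a map $f_G:V_G\to\mathbb{R}$ such that whenever $\varphi:G\to H$ is an isomorphism, $f_G(x)=f_H(\varphi(x))$ for all $x\in V_G$ (values may be negative). A centrality $f$ has no ties on $G$ if $f_G(x)\neq f_G(y)$ for all distinct $x,y\in V_G$; otherwise it has ties on $G$. *)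

theory Defs
  imports Complex_Main
begin

text \<open>A graph with node set {0,...,n-1} and arc set E is the pair (n, E).\<close>
type_synonym graph = "nat \<times> (nat \<times> nat) set"

definition nodes :: "graph \<Rightarrow> nat set" where
  "nodes G = {0..<fst G}"

definition arcs :: "graph \<Rightarrow> (nat \<times> nat) set" where
  "arcs G = snd G"

definition wf_graph :: "graph \<Rightarrow> bool" where
  "wf_graph G \<longleftrightarrow> arcs G \<subseteq> nodes G \<times> nodes G"

definition graph_iso :: "(nat \<Rightarrow> nat) \<Rightarrow> graph \<Rightarrow> graph \<Rightarrow> bool" where
  "graph_iso \<phi> G H \<longleftrightarrow> bij_betw \<phi> (nodes G) (nodes H) \<and>
     (\<forall>x\<in>nodes G. \<forall>y\<in>nodes G. (x, y) \<in> arcs G \<longleftrightarrow> (\<phi> x, \<phi> y) \<in> arcs H)"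

definition automorphism :: "(nat \<Rightarrow> nat) \<Rightarrow> graph \<Rightarrow> bool" where
  "automorphism \<phi> G \<longleftrightarrow> graph_iso \<phi> G G"

definition rigid :: "graph \<Rightarrow> bool" where
  "rigid G \<longleftrightarrow> (\<forall>\<phi>. automorphism \<phi> G \<longrightarrow> (\<forall>x\<in>nodes G. \<phi> x = x))"

definition centrality :: "(graph \<Rightarrow> nat \<Rightarrow> real) \<Rightarrow> bool" where
  "centrality f \<longleftrightarrow> (\<forall>G H \<phi>. wf_graph G \<and> wf_graph H \<and> graph_iso \<phi> G H \<longrightarrow>
       (\<forall>x\<in>nodes G. f G x = f H (\<phi> x)))"

definition has_ties :: "(graph \<Rightarrow> nat \<Rightarrow> real) \<Rightarrow> graph \<Rightarrow> bool" where
  "has_ties f G \<longleftrightarrow> (\<exists>x\<in>nodes G. \<exists>y\<in>nodes G. x \<noteq> y \<and> f G x = f G y)"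

end

theory Submission
  imports Defs
begin

lemma iso_comp:
  assumes "graph_iso \<phi> G H" "graph_iso \<psi> H K"
  shows "graph_iso (\<psi> \<circ> \<phi>) G K"
proof -
  have b1: "bij_betw \<phi> (nodes G) (nodes H)" and b2: "bij_betw \<psi> (nodes H) (nodes K)"
    using assms unfolding graph_iso_def by auto
  have im: "\<And>x. x \<in> nodes G \<Longrightarrow> \<phi> x \<in> nodes H" using b1 bij_betwE by blast
  show ?thesis unfolding graph_iso_def
  proof (intro conjI ballI)
    show "bij_betw (\<psi> \<circ> \<phi>) (nodes G) (nodes K)" using b1 b2 bij_betw_trans by blast
  next
    fix x y assume "x \<in> nodes G" "y \<in> nodes G"
    then show "((x, y) \<in> arcs G) = (((\<psi> \<circ> \<phi>) x, (\<psi> \<circ> \<phi>) y) \<in> arcs K)"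
      using assms im unfolding graph_iso_def by auto
  qed
qed

lemma iso_inv:
  assumes "graph_iso \<phi> G H"
  shows "graph_iso (inv_into (nodes G) \<phi>) H G"
proof -
  have b1: "bij_betw \<phi> (nodes G) (nodes H)" using assms unfolding graph_iso_def by auto
  have b2: "bij_betw (inv_into (nodes G) \<phi>) (nodes H) (nodes G)" using b1 bij_betw_inv_into by blast
  have im: "\<And>u. u \<in> nodes H \<Longrightarrow> inv_into (nodes G) \<phi> u \<in> nodes G" using b2 bij_betwE by blast
  have fi: "\<And>u. u \<in> nodes H \<Longrightarrow> \<phi> (inv_into (nodes G) \<phi> u) = u"
    using b1 by (meson bij_betw_inv_into_right)
  show ?thesis unfolding graph_iso_def
  proof (intro conjI ballI)
    show "bij_betw (inv_into (nodes G) \<phi>) (nodes H) (nodes G)" by (rule b2)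
  next
    fix u v assume u: "u \<in> nodes H" and v: "v \<in> nodes H"
    have "((inv_into (nodes G) \<phi> u, inv_into (nodes G) \<phi> v) \<in> arcs G) =
          ((\<phi> (inv_into (nodes G) \<phi> u), \<phi> (inv_into (nodes G) \<phi> v)) \<in> arcs H)"
      using assms im[OF u] im[OF v] unfolding graph_iso_def by blast
    then show "((u, v) \<in> arcs H) = ((inv_into (nodes G) \<phi> u, inv_into (nodes G) \<phi> v) \<in> arcs G)"
      using fi[OF u] fi[OF v] by simp
  qed
qed

lemma iso_id: "graph_iso id G G"
  unfolding graph_iso_def by auto

definition canon :: "graph \<Rightarrow> graph" where
  "canon G = (SOME H. wf_graph H \<and> (\<exists>\<phi>. graph_iso \<phi> G H))"

definition cf :: "graph \<Rightarrow> nat \<Rightarrow> real" where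
  "cf G x = real (Min {\<phi> x | \<phi>. graph_iso \<phi> G (canon G)})"

lemma canon_ex: "wf_graph G \<Longrightarrow> wf_graph (canon G) \<and> (\<exists>\<phi>. graph_iso \<phi> G (canon G))"
  unfolding canon_def by (rule someI[where x=G]) (use iso_id in blast)

lemma canon_iso:
  assumes "graph_iso \<theta> G H"
  shows "canon G = canon H"
proof -
  have "\<And>K. (wf_graph K \<and> (\<exists>\<phi>. graph_iso \<phi> G K)) = (wf_graph K \<and> (\<exists>\<phi>. graph_iso \<phi> H K))"
    using iso_comp[OF assms] iso_comp[OF iso_inv[OF assms]] by blast
  then show ?thesis unfolding canon_def by simp
qed

lemma cf_set:
  assumes "graph_iso \<theta> G H" "x \<in> nodes G"
  shows "{\<phi> x | \<phi>. graph_iso \<phi> G K} = {\<phi> (\<theta> x) | \<phi>. graph_iso \<phi> H K}"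
proof -
  have b1: "bij_betw \<theta> (nodes G) (nodes H)" using assms unfolding graph_iso_def by auto
  have l: "inv_into (nodes G) \<theta> (\<theta> x) = x" using b1 assms(2) by (meson bij_betw_inv_into_left)
  show ?thesis
  proof (intro set_eqI iffI)
    fix z assume "z \<in> {\<phi> x | \<phi>. graph_iso \<phi> G K}"
    then obtain \<phi> where o: "graph_iso \<phi> G K" "z = \<phi> x" by blast
    show "z \<in> {\<phi> (\<theta> x) | \<phi>. graph_iso \<phi> H K}"
    proof -
      from o have "graph_iso (\<phi> \<circ> inv_into (nodes G) \<theta>) H K" "z = (\<phi> \<circ> inv_into (nodes G) \<theta>) (\<theta> x)"
        using iso_comp[OF iso_inv[OF assms(1)]] l by auto
      then show ?thesis by blast
    qed
  next
    fix z assume "z \<in> {\<phi> (\<theta> x) | \<phi>. graph_iso \<phi> H K}"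
    then obtain \<phi> where o: "graph_iso \<phi> H K" "z = \<phi> (\<theta> x)" by blast
    show "z \<in> {\<phi> x | \<phi>. graph_iso \<phi> G K}"
    proof -
      from o have "graph_iso (\<phi> \<circ> \<theta>) G K" "z = (\<phi> \<circ> \<theta>) x"
        using iso_comp[OF assms(1)] by auto
      then show ?thesis by blast
    qed
  qed
qed

lemma cf_centrality: "centrality cf"
  unfolding centrality_def
proof (intro allI impI ballI)
  fix G H \<theta> x assume a: "wf_graph G \<and> wf_graph H \<and> graph_iso \<theta> G H" and x: "x \<in> nodes G"
  have "canon G = canon H" using a canon_iso by blast
  then show "cf G x = cf H (\<theta> x)" unfolding cf_def using cf_set[OF _ x, of \<theta> H "canon H"] a by simp
qed

lemma rigid_unique:
  assumes "rigid G" "graph_iso \<phi>1 G K" "graph_iso \<phi>2 G K" "x \<in> nodes G"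
  shows "\<phi>1 x = \<phi>2 x"
proof -
  have "automorphism (inv_into (nodes G) \<phi>2 \<circ> \<phi>1) G"
    unfolding automorphism_def using iso_comp[OF assms(2) iso_inv[OF assms(3)]] .
  then have e: "inv_into (nodes G) \<phi>2 (\<phi>1 x) = x" using assms(1,4) unfolding rigid_def by auto
  have "\<phi>1 x \<in> nodes K" using assms(2,4) unfolding graph_iso_def by (meson bij_betwE)
  moreover have "bij_betw \<phi>2 (nodes G) (nodes K)" using assms(3) unfolding graph_iso_def by auto
  ultimately have "\<phi>2 (inv_into (nodes G) \<phi>2 (\<phi>1 x)) = \<phi>1 x" by (meson bij_betw_inv_into_right)
  with e show ?thesis by simp
qed

lemma cf_rigid:
  assumes "wf_graph G" "rigid G"
  shows "\<not> has_ties cf G"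
proof
  assume "has_ties cf G"
  then obtain x y where xy: "x \<in> nodes G" "y \<in> nodes G" "x \<noteq> y" "cf G x = cf G y"
    unfolding has_ties_def by blast
  obtain \<psi> where \<psi>: "graph_iso \<psi> G (canon G)" using canon_ex[OF assms(1)] by blast
  have s: "\<And>z. z \<in> nodes G \<Longrightarrow> {\<phi> z | \<phi>. graph_iso \<phi> G (canon G)} = {\<psi> z}"
    using rigid_unique[OF assms(2) _ \<psi>] \<psi> by blast
  have "\<psi> x = \<psi> y" using xy(4) unfolding cf_def s[OF xy(1)] s[OF xy(2)] by simp
  moreover have "inj_on \<psi> (nodes G)" using \<psi> unfolding graph_iso_def bij_betw_def by auto
  ultimately show False using xy inj_on_def by metis
qed

theorem theorem1:
  shows "(\<forall>f G. centrality f \<and> wf_graph G \<and> \<not> rigid G \<longrightarrow> has_ties f G) \<and>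
         (\<exists>f. centrality f \<and> (\<forall>G. wf_graph G \<and> rigid G \<longrightarrow> \<not> has_ties f G))"
proof (intro conjI allI impI)
  fix f G assume a: "centrality f \<and> wf_graph G \<and> \<not> rigid G"
  then obtain \<phi> x where p: "automorphism \<phi> G" "x \<in> nodes G" "\<phi> x \<noteq> x"
    unfolding rigid_def by blast
  have "\<phi> x \<in> nodes G" using p unfolding automorphism_def graph_iso_def by (meson bij_betwE)
  moreover have "f G x = f G (\<phi> x)" using a p unfolding centrality_def automorphism_def by blast
  ultimately show "has_ties f G" unfolding has_ties_def using p by metis
next
  show "\<exists>f. centrality f \<and> (\<forall>G. wf_graph G \<and> rigid G \<longrightarrow> \<not> has_ties f G)"
    using cf_centrality cf_rigid by blast
qed

end
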